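(* Let $p\geq 5$ be an integer and $s=\frac1p$. Let $n\geq 1$ be an integer. Then there is no integer strictly between $-2\left(n-\frac12+\frac{1}{2^{p+1}}\right)^s$ and $-2\left(n-\frac12\right)^s$. *)

theory Defs
  imports Complex_Main
begin

end

theory Submission
  imports Defs
begin

lemma pw_pos:
  fixes x :: real and p :: nat
  assumes "x > 0" "p > 0"
  shows "(2 * x powr (1 / real p)) ^ p = 2 ^ p * x"
proof -
  have "(x powr (1 / real p)) ^ p = (x powr (1 / real p)) powr real p"
    using assms by (simp add: powr_realpow)
  also have "\<dots> = x" using assms by (simp add: powr_powr)
  finally show ?thesis by (simp add: power_mult_distrib)
qed

theorem lemma3p2:
  fixes p :: nat and n :: nat and s :: real
  assumes "p \<ge> 5" and "s = 1 / real p" and "n \<ge> 1"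
  shows "\<not> (\<exists>m::int.
           - 2 * (real n - 1/2 + 1 / 2 ^ (p + 1)) powr s < real_of_int m \<and>
           real_of_int m < - 2 * (real n - 1/2) powr s)"
proof
  assume "\<exists>m::int.
           - 2 * (real n - 1/2 + 1 / 2 ^ (p + 1)) powr s < real_of_int m \<and>
           real_of_int m < - 2 * (real n - 1/2) powr s"
  then obtain m :: int where m1: "- 2 * (real n - 1/2 + 1 / 2 ^ (p + 1)) powr s < m"
    and m2: "m < - 2 * (real n - 1/2) powr s" by blast
  define a where "a = real n - 1/2"
  define b where "b = a + 1 / 2 ^ (p + 1)"
  define k where "k = - m"
  have p0: "p > 0" using assms(1) by simp
  have a0: "a > 0" using assms(3) unfolding a_def by simp
  have b0: "b > 0" using a0 unfolding b_def by (simp add: add_pos_pos)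
  have k1: "2 * a powr s < real_of_int k" using m2 unfolding a_def k_def by simp
  have k2: "real_of_int k < 2 * b powr s" using m1 unfolding b_def a_def k_def by simp
  have ge0: "0 \<le> 2 * a powr s" by simp
  have kp: "0 \<le> real_of_int k" using ge0 k1 by linarith
  have "(2 * a powr s) ^ p < (real_of_int k) ^ p"
    using k1 ge0 p0 by (intro power_strict_mono) auto
  hence L: "2 ^ p * a < (real_of_int k) ^ p" using pw_pos[OF a0 p0] assms(2) by simp
  have "(real_of_int k) ^ p < (2 * b powr s) ^ p"
    using k2 kp p0 by (intro power_strict_mono) auto
  hence R: "(real_of_int k) ^ p < 2 ^ p * b" using pw_pos[OF b0 p0] assms(2) by simp
  obtain q where q: "p = Suc q" using p0 by (cases p) auto
  have N: "2 ^ p * a = real_of_int (2 ^ q * (2 * int n - 1))"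
    unfolding a_def q by (simp add: algebra_simps)
  have B: "2 ^ p * b = 2 ^ p * a + 1/2"
    unfolding b_def by (simp add: algebra_simps)
  have "real_of_int (2 ^ q * (2 * int n - 1)) < real_of_int (k ^ p)" using L N by simp
  hence i1: "2 ^ q * (2 * int n - 1) < k ^ p" by linarith
  have "real_of_int (k ^ p) < real_of_int (2 ^ q * (2 * int n - 1)) + 1/2" using R N B by simp
  hence "real_of_int (k ^ p) < real_of_int (2 ^ q * (2 * int n - 1) + 1)" by simp
  hence "k ^ p < 2 ^ q * (2 * int n - 1) + 1" by linarith
  with i1 show False by simp
qed

end
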